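(* Consider a channel with finite input alphabet $\mathcal X$ and output alphabet $\mathcal Y$ specified by causal conditioning pmfs $p(y^n\|x^n)$ for every $n\ge1$, whose feedback capacity is $C_{fb}=\lim_{n\to\infty}\frac1n\max_{P(x^n\|y^{n-1})}I(X^n\to Y^n)$ and whose non-feedback capacity is $C=\lim_{n\to\infty}\frac1n\max_{P(x^n)}I(X^n\to Y^n)$. Suppose that for every $n$ there is a causal conditioning pmf $P^*(x^n\|y^{n-1})$, all of whose entries are positive, achieving $\max_{P(x^n\|y^{n-1})}I(X^n\to Y^n)$, and let $P^*(y^n)=\sum_{x^n}p(y^n\|x^n)p^*(x^n\|y^{n-1})$ be the induced output pmf. If for every $n$ there exists an input pmf $P(x^n)$ such that $p^*(y^n)=\sum_{x^n}p(y^n\|x^n)p(x^n)$ for all $y^n$, then $C_{fb}=C$.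
   Context: Causal conditioning: $p(x^n\|y^{n-1})=\prod_{i=1}^n p(x_i|x^{i-1},y^{i-1})$, $p(y^n\|x^n)=\prod_{i=1}^n p(y_i|y^{i-1},x^i)$. Directed information: $I(X^n\to Y^n)=\sum_{i=1}^n I(X^i;Y_i|Y^{i-1})$, computed under the joint law $p(x^n\|y^{n-1})p(y^n\|x^n)$ (with $p(x^n\|y^{n-1})=p(x^n)$ in the non-feedback maximization). *)

theory Defs
  imports Complex_Main
begin

definition seqs :: "nat \<Rightarrow> 'a list set" where
  "seqs n = {xs. length xs = n}"

definition ccond_chan :: "nat \<Rightarrow> ('x::finite list \<Rightarrow> 'y::finite list \<Rightarrow> real) \<Rightarrow> bool" where
  "ccond_chan n W \<longleftrightarrow> (\<exists>q :: nat \<Rightarrow> 'y list \<Rightarrow> 'x list \<Rightarrow> 'y \<Rightarrow> real.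
      (\<forall>i ys xs y. 0 \<le> q i ys xs y) \<and> (\<forall>i ys xs. (\<Sum>y\<in>UNIV. q i ys xs y) = 1) \<and>
      (\<forall>xs\<in>seqs n. \<forall>ys\<in>seqs n.
          W xs ys = (\<Prod>i<n. q i (take i ys) (take (Suc i) xs) (ys ! i))))"

definition ccond_input :: "nat \<Rightarrow> ('x::finite list \<Rightarrow> 'y::finite list \<Rightarrow> real) \<Rightarrow> bool" where
  "ccond_input n Q \<longleftrightarrow> (\<exists>r :: nat \<Rightarrow> 'x list \<Rightarrow> 'y list \<Rightarrow> 'x \<Rightarrow> real.
      (\<forall>i xs ys x. 0 \<le> r i xs ys x) \<and> (\<forall>i xs ys. (\<Sum>x\<in>UNIV. r i xs ys x) = 1) \<and>
      (\<forall>xs\<in>seqs n. \<forall>ys\<in>seqs n.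
          Q xs ys = (\<Prod>i<n. r i (take i xs) (take i ys) (xs ! i))))"

definition is_pmf_seq :: "nat \<Rightarrow> ('x::finite list \<Rightarrow> real) \<Rightarrow> bool" where
  "is_pmf_seq n P \<longleftrightarrow> (\<forall>xs\<in>seqs n. 0 \<le> P xs) \<and> (\<Sum>xs\<in>seqs n. P xs) = 1"

definition marg :: "nat \<Rightarrow> ('x::finite list \<Rightarrow> 'y::finite list \<Rightarrow> real) \<Rightarrow> nat \<Rightarrow> nat
                      \<Rightarrow> 'x list \<Rightarrow> 'y list \<Rightarrow> real" where
  "marg n J i j a b = (\<Sum>xs\<in>seqs n. \<Sum>ys\<in>seqs n.
       if take i xs = a \<and> take j ys = b then J xs ys else 0)"

text \<open>Conditional mutual information I(X^i;Y_i|Y^{i-1}) under joint pmf J on length-n sequences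
  (bits; terms with zero probability contribute 0).\<close>
definition cmi_term :: "nat \<Rightarrow> ('x::finite list \<Rightarrow> 'y::finite list \<Rightarrow> real) \<Rightarrow> nat \<Rightarrow> real" where
  "cmi_term n J i = (\<Sum>a\<in>seqs i. \<Sum>b\<in>seqs i.
      marg n J i i a b *
        log 2 ((marg n J i i a b * marg n J 0 (i - 1) [] (take (i - 1) b)) /
               (marg n J i (i - 1) a (take (i - 1) b) * marg n J 0 i [] b)))"

definition dirinfo :: "nat \<Rightarrow> ('x::finite list \<Rightarrow> 'y::finite list \<Rightarrow> real)
                         \<Rightarrow> ('x list \<Rightarrow> 'y list \<Rightarrow> real) \<Rightarrow> real" where
  "dirinfo n Q W = (\<Sum>i=1..n. cmi_term n (\<lambda>xs ys. Q xs ys * W xs ys) i)"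

definition Cfb_n :: "(nat \<Rightarrow> 'x::finite list \<Rightarrow> 'y::finite list \<Rightarrow> real) \<Rightarrow> nat \<Rightarrow> real" where
  "Cfb_n W n = Sup ((\<lambda>Q. dirinfo n Q (W n)) ` {Q. ccond_input n Q})"

definition Cnf_n :: "(nat \<Rightarrow> 'x::finite list \<Rightarrow> 'y::finite list \<Rightarrow> real) \<Rightarrow> nat \<Rightarrow> real" where
  "Cnf_n W n = Sup ((\<lambda>P. dirinfo n (\<lambda>xs ys. P xs) (W n)) ` {P. is_pmf_seq n P})"

definition feedback_capacity :: "(nat \<Rightarrow> 'x::finite list \<Rightarrow> 'y::finite list \<Rightarrow> real) \<Rightarrow> real" where
  "feedback_capacity W = lim (\<lambda>n. Cfb_n W n / real n)"

definition capacity :: "(nat \<Rightarrow> 'x::finite list \<Rightarrow> 'y::finite list \<Rightarrow> real) \<Rightarrow> real" where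
  "capacity W = lim (\<lambda>n. Cnf_n W n / real n)"

end

theory Submission
  imports Defs
begin



lemma finite_seqs[simp]: "finite (seqs n :: 'a::finite list set)"
proof -
  have "seqs n = {xs::'a list. set xs \<subseteq> UNIV \<and> length xs = n}" by (auto simp: seqs_def)
  then show ?thesis using finite_lists_length_eq[of "UNIV::'a set" n] by simp
qed

lemma seqs_split:
  assumes "i \<le> n"
  shows "(\<Sum>xs\<in>seqs n. f xs) = (\<Sum>a\<in>seqs i. \<Sum>zs\<in>seqs (n-i). f (a@zs))"
proof -
  have bij: "bij_betw (\<lambda>(a,zs). a@zs) (seqs i \<times> seqs (n-i)) (seqs n)"
    unfolding bij_betw_def
  proof
    show "inj_on (\<lambda>(a,zs). a@zs) (seqs i \<times> seqs (n-i))"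
      by (auto simp: inj_on_def seqs_def)
    show "(\<lambda>(a,zs). a@zs) ` (seqs i \<times> seqs (n-i)) = seqs n"
    proof
      show "(\<lambda>(a,zs). a@zs) ` (seqs i \<times> seqs (n-i)) \<subseteq> seqs n" using assms by (auto simp: seqs_def)
      show "seqs n \<subseteq> (\<lambda>(a,zs). a@zs) ` (seqs i \<times> seqs (n-i))"
      proof
        fix xs assume "xs \<in> seqs n"
        then have "(take i xs, drop i xs) \<in> seqs i \<times> seqs (n-i)" using assms by (auto simp: seqs_def)
        then show "xs \<in> (\<lambda>(a,zs). a@zs) ` (seqs i \<times> seqs (n-i))"
          by (metis (no_types, lifting) append_take_drop_id case_prod_conv image_eqI)
      qed
    qed
  qed
  have "(\<Sum>a\<in>seqs i. \<Sum>zs\<in>seqs (n-i). f (a@zs)) = (\<Sum>p\<in>seqs i \<times> seqs (n-i). f ((\<lambda>(a,zs). a@zs) p))"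
    by (simp add: sum.cartesian_product case_prod_beta)
  also have "\<dots> = (\<Sum>xs\<in>seqs n. f xs)" using sum.reindex_bij_betw[OF bij] .
  finally show ?thesis by simp
qed

lemma seqs_0[simp]: "seqs 0 = {[]}" by (auto simp: seqs_def)

lemma seqs_1: "seqs (Suc 0) = (\<lambda>x. [x]) ` UNIV"
  by (auto simp: seqs_def length_Suc_conv)

lemma sum_seqs_1: "(\<Sum>a\<in>seqs (Suc 0). f a) = (\<Sum>x\<in>UNIV. f [x])"
  unfolding seqs_1 by (subst sum.reindex) (auto simp: inj_on_def)

lemma seqs_Suc_cons: "(\<Sum>xs\<in>seqs (Suc m). f xs) = (\<Sum>x\<in>UNIV. \<Sum>xs\<in>seqs m. f (x#xs))"
  using seqs_split[of 1 "Suc m" f] by (simp add: sum_seqs_1)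

lemma seqs_Suc_snoc: "(\<Sum>xs\<in>seqs (Suc m). f xs) = (\<Sum>xs\<in>seqs m. \<Sum>x\<in>UNIV. f (xs@[x]))"
  using seqs_split[of m "Suc m" f] by (simp add: sum_seqs_1)

definition Gp :: "(nat \<Rightarrow> 'a list \<Rightarrow> 'b list \<Rightarrow> 'a \<Rightarrow> 'b \<Rightarrow> real) \<Rightarrow> nat \<Rightarrow> 'a list \<Rightarrow> 'b list \<Rightarrow> real" where
  "Gp g m xs ys = (\<Prod>k<m. g k (take k xs) (take k ys) (xs!k) (ys!k))"

lemma Gp_snoc:
  assumes "length a = i" "length b = i"
  shows "Gp g (Suc i) (a@[x]) (b@[y]) = Gp g i a b * g i a b x y"
  unfolding Gp_def using assms
  by (auto simp: nth_append intro!: prod.cong)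

lemma Gp_nonneg: "(\<And>k a b x y. 0 \<le> g k a b x y) \<Longrightarrow> 0 \<le> Gp g m xs ys"
  unfolding Gp_def by (simp add: prod_nonneg)

lemma Gp_sumout:
  fixes g :: "nat \<Rightarrow> 'a::finite list \<Rightarrow> 'b::finite list \<Rightarrow> 'a \<Rightarrow> 'b \<Rightarrow> real"
  assumes norm: "\<And>k a b. (\<Sum>x\<in>UNIV. \<Sum>y\<in>UNIV. g k a b x y) = 1"
  shows "length a = i \<Longrightarrow> length b = i \<Longrightarrow>
     (\<Sum>zs\<in>seqs m. \<Sum>ws\<in>seqs m. Gp g (i+m) (a@zs) (b@ws)) = Gp g i a b"
proof (induction m arbitrary: i a b)
  case 0
  then show ?case by simp
next
  case (Suc m)
  have "(\<Sum>zs\<in>seqs (Suc m). \<Sum>ws\<in>seqs (Suc m). Gp g (i + Suc m) (a@zs) (b@ws))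
      = (\<Sum>x\<in>UNIV. \<Sum>zs\<in>seqs m. \<Sum>y\<in>UNIV. \<Sum>ws\<in>seqs m. Gp g (Suc i + m) ((a@[x])@zs) ((b@[y])@ws))"
    by (simp add: seqs_Suc_cons)
  also have "\<dots> = (\<Sum>x\<in>UNIV. \<Sum>y\<in>UNIV. \<Sum>zs\<in>seqs m. \<Sum>ws\<in>seqs m. Gp g (Suc i + m) ((a@[x])@zs) ((b@[y])@ws))"
    by (rule sum.cong[OF refl], rule sum.swap)
  also have "\<dots> = (\<Sum>x\<in>UNIV. \<Sum>y\<in>UNIV. Gp g (Suc i) (a@[x]) (b@[y]))"
    using Suc.IH[of "a@[x]" "Suc i" "b@[y]" for x y] Suc.prems by simp
  also have "\<dots> = (\<Sum>x\<in>UNIV. \<Sum>y\<in>UNIV. Gp g i a b * g i a b x y)"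
    using Suc by (simp add: Gp_snoc)
  also have "\<dots> = Gp g i a b" using norm by (simp add: sum_distrib_left[symmetric])
  finally show ?case .
qed

lemma Gp_E:
  fixes g :: "nat \<Rightarrow> 'a::finite list \<Rightarrow> 'b::finite list \<Rightarrow> 'a \<Rightarrow> 'b \<Rightarrow> real"
  assumes norm: "\<And>k a b. (\<Sum>x\<in>UNIV. \<Sum>y\<in>UNIV. g k a b x y) = 1" and "i \<le> n"
  shows "(\<Sum>xs\<in>seqs n. \<Sum>ys\<in>seqs n. Gp g n xs ys * f (take i xs) (take i ys))
       = (\<Sum>a\<in>seqs i. \<Sum>b\<in>seqs i. Gp g i a b * f a b)"
proof -
  have "(\<Sum>xs\<in>seqs n. \<Sum>ys\<in>seqs n. Gp g n xs ys * f (take i xs) (take i ys))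
     = (\<Sum>a\<in>seqs i. \<Sum>zs\<in>seqs (n-i). \<Sum>b\<in>seqs i. \<Sum>ws\<in>seqs (n-i). Gp g (i+(n-i)) (a@zs) (b@ws) * f a b)"
  proof -
    have e1: "(\<Sum>ys\<in>seqs n. Gp g n xs ys * f (take i xs) (take i ys))
       = (\<Sum>b\<in>seqs i. \<Sum>ws\<in>seqs (n-i). Gp g n xs (b@ws) * f (take i xs) b)" for xs
      using seqs_split[OF assms(2), of "\<lambda>ys. Gp g n xs ys * f (take i xs) (take i ys)"]
      by (simp add: seqs_def)
    have e2: "(\<Sum>xs\<in>seqs n. \<Sum>b\<in>seqs i. \<Sum>ws\<in>seqs (n-i). Gp g n xs (b@ws) * f (take i xs) b)
       = (\<Sum>a\<in>seqs i. \<Sum>zs\<in>seqs (n-i). \<Sum>b\<in>seqs i. \<Sum>ws\<in>seqs (n-i). Gp g n (a@zs) (b@ws) * f (take i (a@zs)) b)"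
      using seqs_split[OF assms(2)] by blast
    show ?thesis unfolding e1 e2 using assms(2)
      by (intro sum.cong refl) (simp add: seqs_def)
  qed
  also have "\<dots> = (\<Sum>a\<in>seqs i. \<Sum>b\<in>seqs i. f a b * (\<Sum>zs\<in>seqs (n-i). \<Sum>ws\<in>seqs (n-i). Gp g (i+(n-i)) (a@zs) (b@ws)))"
    by (rule sum.cong[OF refl], subst sum.swap) (simp add: sum_distrib_left mult.commute)
  also have "\<dots> = (\<Sum>a\<in>seqs i. \<Sum>b\<in>seqs i. Gp g i a b * f a b)"
    apply (intro sum.cong refl)
    subgoal for a b using Gp_sumout[OF norm, where a=a and i=i and b=b and m="n-i"] by (simp add: seqs_def)
    done
  finally show ?thesis .
qed




definition pY :: "(nat \<Rightarrow> 'a list \<Rightarrow> 'b list \<Rightarrow> 'a \<Rightarrow> 'b \<Rightarrow> real) \<Rightarrow> nat \<Rightarrow> 'b list \<Rightarrow> real" where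
  "pY g k b = (\<Sum>a\<in>seqs k. Gp g k a b)"

lemma marg_m:
  fixes g :: "nat \<Rightarrow> 'a::finite list \<Rightarrow> 'b::finite list \<Rightarrow> 'a \<Rightarrow> 'b \<Rightarrow> real"
  assumes norm: "\<And>k a b. (\<Sum>x\<in>UNIV. \<Sum>y\<in>UNIV. g k a b x y) = 1"
    and J: "\<And>xs ys. xs \<in> seqs n \<Longrightarrow> ys \<in> seqs n \<Longrightarrow> J xs ys = Gp g n xs ys"
    and "i \<le> m" "j \<le> m" "m \<le> n"
  shows "marg n J i j a b = (\<Sum>a'\<in>seqs m. \<Sum>b'\<in>seqs m. Gp g m a' b' * (if take i a' = a \<and> take j b' = b then 1 else 0))"
proof -
  have "marg n J i j a b = (\<Sum>xs\<in>seqs n. \<Sum>ys\<in>seqs n. Gp g n xs ys *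
      (\<lambda>a' b'. if take i a' = a \<and> take j b' = b then 1 else 0) (take m xs) (take m ys))"
    unfolding marg_def using assms(3-5) by (intro sum.cong refl) (auto simp: J min_def)
  also have "\<dots> = (\<Sum>a'\<in>seqs m. \<Sum>b'\<in>seqs m. Gp g m a' b' * (if take i a' = a \<and> take j b' = b then 1 else 0))"
    by (rule Gp_E[OF norm assms(5)])
  finally show ?thesis .
qed

lemma sum2_delta:
  assumes "finite S" "finite T" "A \<in> S" "B \<in> T"
  shows "(\<Sum>a'\<in>S. \<Sum>b'\<in>T. G a' b' * (if a' = A \<and> b' = B then 1 else 0)) = (G A B :: real)"
proof -
  have "(\<Sum>a'\<in>S. \<Sum>b'\<in>T. G a' b' * (if a' = A \<and> b' = B then 1 else 0))
      = (\<Sum>a'\<in>S. if a' = A then G a' B else 0)"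
    using assms by (intro sum.cong refl) (auto simp: if_distrib sum.delta cong: if_cong)
  also have "\<dots> = G A B" using assms by (simp add: sum.delta)
  finally show ?thesis .
qed

context
  fixes g :: "nat \<Rightarrow> 'a::finite list \<Rightarrow> 'b::finite list \<Rightarrow> 'a \<Rightarrow> 'b \<Rightarrow> real"
    and J :: "'a list \<Rightarrow> 'b list \<Rightarrow> real" and n :: nat
  assumes norm: "\<And>k a b. (\<Sum>x\<in>UNIV. \<Sum>y\<in>UNIV. g k a b x y) = 1"
    and J: "\<And>xs ys. xs \<in> seqs n \<Longrightarrow> ys \<in> seqs n \<Longrightarrow> J xs ys = Gp g n xs ys"
begin

lemma marg_ii: assumes "a \<in> seqs i" "b \<in> seqs i" "i \<le> n"
  shows "marg n J i i a b = Gp g i a b"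
proof -
  have "marg n J i i a b = (\<Sum>a'\<in>seqs i. \<Sum>b'\<in>seqs i. Gp g i a' b' * (if take i a' = a \<and> take i b' = b then 1 else 0))"
    using marg_m[OF norm J, where i=i and j=i and m=i] assms by simp
  also have "\<dots> = (\<Sum>a'\<in>seqs i. \<Sum>b'\<in>seqs i. Gp g i a' b' * (if a' = a \<and> b' = b then 1 else 0))"
    by (intro sum.cong refl) (auto simp: seqs_def)
  also have "\<dots> = Gp g i a b" using assms by (intro sum2_delta) auto
  finally show ?thesis .
qed

lemma marg_0j: assumes "b \<in> seqs j" "j \<le> n"
  shows "marg n J 0 j [] b = pY g j b"
proof -
  have "marg n J 0 j [] b = (\<Sum>a'\<in>seqs j. \<Sum>b'\<in>seqs j. Gp g j a' b' * (if take 0 a' = [] \<and> take j b' = b then 1 else 0))"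
    using marg_m[OF norm J, where i=0 and j=j and m=j] assms by simp
  also have "\<dots> = (\<Sum>a'\<in>seqs j. \<Sum>b'\<in>seqs j. Gp g j a' b' * (if b' = b then 1 else 0))"
    by (intro sum.cong refl) (auto simp: seqs_def)
  also have "\<dots> = pY g j b" using assms unfolding pY_def
    by (intro sum.cong refl) (auto simp: if_distrib sum.delta cong: if_cong)
  finally show ?thesis .
qed

lemma marg_Sk_k: assumes "a0 \<in> seqs k" "b0 \<in> seqs k" "Suc k \<le> n"
  shows "marg n J (Suc k) k (a0@[x]) b0 = (\<Sum>y\<in>UNIV. Gp g k a0 b0 * g k a0 b0 x y)"
proof -
  have "marg n J (Suc k) k (a0@[x]) b0 = (\<Sum>a'\<in>seqs (Suc k). \<Sum>b'\<in>seqs (Suc k). Gp g (Suc k) a' b' *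
      (if take (Suc k) a' = a0@[x] \<and> take k b' = b0 then 1 else 0))"
    using marg_m[OF norm J, where i="Suc k" and j=k and m="Suc k"] assms by simp
  also have "\<dots> = (\<Sum>a'\<in>seqs (Suc k). \<Sum>b1\<in>seqs k. \<Sum>y\<in>UNIV. Gp g (Suc k) a' (b1@[y]) *
      (if a' = a0@[x] \<and> b1 = b0 then 1 else 0))"
    apply (rule sum.cong[OF refl])
    apply (subst seqs_Suc_snoc)
    apply (intro sum.cong refl)
    apply (auto simp: seqs_def)
    done
  also have "\<dots> = (\<Sum>a'\<in>seqs (Suc k). \<Sum>b1\<in>seqs k. (\<Sum>y\<in>UNIV. Gp g (Suc k) a' (b1@[y])) *
      (if a' = a0@[x] \<and> b1 = b0 then 1 else 0))"
    by (simp add: sum_distrib_right)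
  also have "\<dots> = (\<Sum>y\<in>UNIV. Gp g (Suc k) (a0@[x]) (b0@[y]))"
    using assms by (intro sum2_delta) (auto simp: seqs_def simp del: finite_seqs intro: finite_seqs[unfolded seqs_def])
  also have "\<dots> = (\<Sum>y\<in>UNIV. Gp g k a0 b0 * g k a0 b0 x y)"
    using assms by (simp add: Gp_snoc seqs_def)
  finally show ?thesis .
qed

end



definition gg :: "(nat \<Rightarrow> 'a list \<Rightarrow> 'b list \<Rightarrow> 'a \<Rightarrow> real) \<Rightarrow> (nat \<Rightarrow> 'b list \<Rightarrow> 'a list \<Rightarrow> 'b \<Rightarrow> real)
   \<Rightarrow> nat \<Rightarrow> 'a list \<Rightarrow> 'b list \<Rightarrow> 'a \<Rightarrow> 'b \<Rightarrow> real" where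
  "gg r q k a b x y = r k a b x * q k b (a@[x]) y"

context
  fixes r :: "nat \<Rightarrow> 'a::finite list \<Rightarrow> 'b::finite list \<Rightarrow> 'a \<Rightarrow> real"
    and q :: "nat \<Rightarrow> 'b list \<Rightarrow> 'a list \<Rightarrow> 'b \<Rightarrow> real"
    and J :: "'a list \<Rightarrow> 'b list \<Rightarrow> real" and n :: nat
  assumes r0: "\<And>i xs ys x. 0 \<le> r i xs ys x" and r1: "\<And>i xs ys. (\<Sum>x\<in>UNIV. r i xs ys x) = 1"
    and q0: "\<And>i ys xs y. 0 \<le> q i ys xs y" and q1: "\<And>i ys xs. (\<Sum>y\<in>UNIV. q i ys xs y) = 1"
    and J: "\<And>xs ys. xs \<in> seqs n \<Longrightarrow> ys \<in> seqs n \<Longrightarrow> J xs ys = Gp (gg r q) n xs ys"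
begin

lemma gg_norm: "(\<Sum>x\<in>UNIV. \<Sum>y\<in>UNIV. gg r q k a b x y) = 1"
  by (simp add: gg_def sum_distrib_left[symmetric] q1 r1)

lemma gg_nonneg: "0 \<le> gg r q k a b x y"
  by (simp add: gg_def r0 q0)

lemma Gp0: "0 \<le> Gp (gg r q) m a b" by (rule Gp_nonneg[OF gg_nonneg])

lemma pY_ge: "a \<in> seqs m \<Longrightarrow> Gp (gg r q) m a b \<le> pY (gg r q) m b"
  unfolding pY_def by (rule member_le_sum) (auto simp: Gp0)

lemma cmi_point:
  assumes k: "k < n" and a: "a \<in> seqs (Suc k)" and b: "b \<in> seqs (Suc k)"
  shows "marg n J (Suc k) (Suc k) a b * log 2 ((marg n J (Suc k) (Suc k) a b * marg n J 0 (Suc k - 1) [] (take (Suc k - 1) b)) /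
               (marg n J (Suc k) (Suc k - 1) a (take (Suc k - 1) b) * marg n J 0 (Suc k) [] b))
    = Gp (gg r q) (Suc k) a b * (log 2 (q k (take k b) a (b!k)) + log 2 (pY (gg r q) k (take k b)) - log 2 (pY (gg r q) (Suc k) b))"
proof -
  obtain a0 x where ax: "a = a0@[x]" and a0: "a0 \<in> seqs k" using a
    by (auto simp: seqs_def length_Suc_conv_rev)
  obtain b0 y where bb: "b = b0@[y]" and b0: "b0 \<in> seqs k" using b
    by (auto simp: seqs_def length_Suc_conv_rev)
  have lk: "length a0 = k" "length b0 = k" using a0 b0 by (auto simp: seqs_def)
  define G0 where "G0 = Gp (gg r q) k a0 b0"
  define R where "R = r k a0 b0 x"
  define Qv where "Qv = q k b0 (a0@[x]) y"
  define P1 where "P1 = pY (gg r q) k b0"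
  define P2 where "P2 = pY (gg r q) (Suc k) b"
  have m1: "marg n J (Suc k) (Suc k) a b = G0 * (R * Qv)"
    using marg_ii[OF gg_norm J a b] k by (simp add: ax bb Gp_snoc lk G0_def R_def Qv_def gg_def)
  have m2: "marg n J 0 (Suc k - 1) [] (take (Suc k - 1) b) = P1"
    using marg_0j[OF gg_norm J b0] k by (simp add: bb lk P1_def)
  have m3: "marg n J (Suc k) (Suc k - 1) a (take (Suc k - 1) b) = G0 * R"
    using marg_Sk_k[OF gg_norm J a0 b0, of x] k
    by (simp add: ax bb lk G0_def R_def gg_def sum_distrib_left[symmetric] q1)
  have m4: "marg n J 0 (Suc k) [] b = P2"
    using marg_0j[OF gg_norm J b] k by (simp add: P2_def)
  have G1: "Gp (gg r q) (Suc k) a b = G0 * (R * Qv)"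
    by (simp add: ax bb Gp_snoc lk G0_def R_def Qv_def gg_def)
  have qv: "q k (take k b) a (b!k) = Qv" by (simp add: Qv_def ax bb lk nth_append)
  have tb: "take k b = b0" by (simp add: bb lk)
  show ?thesis
  proof (cases "G0 * (R * Qv) = 0")
    case True
    then show ?thesis unfolding m1 m2 m3 m4 G1 by simp
  next
    case False
    have "0 \<le> G0" "0 \<le> R" "0 \<le> Qv" by (auto simp: G0_def R_def Qv_def Gp0 r0 q0)
    with False have pos: "0 < G0" "0 < R" "0 < Qv" by (auto simp: less_le)
    have "G0 \<le> P1" unfolding G0_def P1_def by (rule pY_ge[OF a0])
    then have p1: "0 < P1" using pos by simp
    have "G0 * (R * Qv) \<le> P2" unfolding P2_def using pY_ge[OF a, of b] G1 by simp
    then have p2: "0 < P2" using pos by (smt (verit) mult_pos_pos)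
    have "(G0 * (R * Qv) * P1) / (G0 * R * P2) = Qv * P1 / P2" using pos by (simp add: field_simps)
    then have L: "log 2 ((G0 * (R * Qv) * P1) / (G0 * R * P2)) = log 2 Qv + log 2 P1 - log 2 P2"
      using pos p1 p2 by (simp add: log_mult log_divide)
    have qv': "q k b0 a (b!k) = Qv" using qv tb by simp
    show ?thesis unfolding m1 m2 m3 m4 G1 tb qv' P1_def[symmetric] P2_def[symmetric] L ..
  qed
qed

lemma cmi_Suc:
  assumes k: "k < n"
  shows "cmi_term n J (Suc k) = (\<Sum>xs\<in>seqs n. \<Sum>ys\<in>seqs n. Gp (gg r q) n xs ys *
     (log 2 (q k (take k ys) (take (Suc k) xs) (ys!k)) + log 2 (pY (gg r q) k (take k ys))
       - log 2 (pY (gg r q) (Suc k) (take (Suc k) ys))))"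
proof -
  define F where "F a b = log 2 (q k (take k b) a (b!k)) + log 2 (pY (gg r q) k (take k b)) - log 2 (pY (gg r q) (Suc k) b)" for a b
  have "cmi_term n J (Suc k) = (\<Sum>a\<in>seqs (Suc k). \<Sum>b\<in>seqs (Suc k). Gp (gg r q) (Suc k) a b * F a b)"
    unfolding cmi_term_def F_def using k by (intro sum.cong refl cmi_point) auto
  also have "\<dots> = (\<Sum>xs\<in>seqs n. \<Sum>ys\<in>seqs n. Gp (gg r q) n xs ys * F (take (Suc k) xs) (take (Suc k) ys))"
    using k by (intro Gp_E[OF gg_norm, symmetric]) auto
  also have "\<dots> = (\<Sum>xs\<in>seqs n. \<Sum>ys\<in>seqs n. Gp (gg r q) n xs ys *
     (log 2 (q k (take k ys) (take (Suc k) xs) (ys!k)) + log 2 (pY (gg r q) k (take k ys))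
       - log 2 (pY (gg r q) (Suc k) (take (Suc k) ys))))"
    using k by (intro sum.cong refl) (auto simp: F_def seqs_def min_def)
  finally show ?thesis .
qed

lemma chain:
  "(\<Sum>i=1..n. cmi_term n J i) = (\<Sum>xs\<in>seqs n. \<Sum>ys\<in>seqs n. Gp (gg r q) n xs ys *
       (\<Sum>k<n. log 2 (q k (take k ys) (take (Suc k) xs) (ys!k))))
     - (\<Sum>xs\<in>seqs n. \<Sum>ys\<in>seqs n. Gp (gg r q) n xs ys * log 2 (pY (gg r q) n ys))"
proof -
  define A where "A k = (\<Sum>xs\<in>seqs n. \<Sum>ys\<in>seqs n. Gp (gg r q) n xs ys * log 2 (q k (take k ys) (take (Suc k) xs) (ys!k)))" for k
  define Bf where "Bf j = (\<Sum>xs\<in>seqs n. \<Sum>ys\<in>seqs n. Gp (gg r q) n xs ys * log 2 (pY (gg r q) j (take j ys)))" for j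
  have c: "cmi_term n J (Suc k) = A k + (Bf k - Bf (Suc k))" if "k < n" for k
    unfolding cmi_Suc[OF that] A_def Bf_def
    by (simp add: ring_distribs sum.distrib sum_subtractf)
  have "(\<Sum>i=1..n. cmi_term n J i) = (\<Sum>k<n. cmi_term n J (Suc k))"
    by (simp add: sum.atLeast1_atMost_eq)
  also have "\<dots> = (\<Sum>k<n. A k) + (\<Sum>k<n. Bf k - Bf (Suc k))"
    by (simp add: c sum.distrib)
  also have "(\<Sum>k<n. Bf k - Bf (Suc k)) = Bf 0 - Bf n" by (rule sum_lessThan_telescope')
  also have "Bf 0 = 0" by (simp add: Bf_def pY_def Gp_def)
  also have "Bf n = (\<Sum>xs\<in>seqs n. \<Sum>ys\<in>seqs n. Gp (gg r q) n xs ys * log 2 (pY (gg r q) n ys))"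
    unfolding Bf_def by (intro sum.cong refl) (auto simp: seqs_def)
  also have "(\<Sum>k<n. A k) = (\<Sum>xs\<in>seqs n. \<Sum>ys\<in>seqs n. Gp (gg r q) n xs ys *
       (\<Sum>k<n. log 2 (q k (take k ys) (take (Suc k) xs) (ys!k))))"
    unfolding A_def by (simp add: sum_distrib_left sum.swap[of _ "{..<n}"])
  finally show ?thesis by simp
qed

end



lemma dirinfo_formula:
  fixes W :: "'x::finite list \<Rightarrow> 'y::finite list \<Rightarrow> real"
  assumes "ccond_chan n W"
  obtains h where "\<And>Q. ccond_input n Q \<Longrightarrow> dirinfo n Q W =
     (\<Sum>xs\<in>seqs n. \<Sum>ys\<in>seqs n. Q xs ys * W xs ys * h xs ys)
   - (\<Sum>xs\<in>seqs n. \<Sum>ys\<in>seqs n. Q xs ys * W xs ys * log 2 (\<Sum>xs'\<in>seqs n. Q xs' ys * W xs' ys))"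
proof -
  obtain q :: "nat \<Rightarrow> 'y list \<Rightarrow> 'x list \<Rightarrow> 'y \<Rightarrow> real" where
    q0: "\<And>i ys xs y. 0 \<le> q i ys xs y" and q1: "\<And>i ys xs. (\<Sum>y\<in>UNIV. q i ys xs y) = 1" and
    qW: "\<And>xs ys. xs\<in>seqs n \<Longrightarrow> ys\<in>seqs n \<Longrightarrow> W xs ys = (\<Prod>i<n. q i (take i ys) (take (Suc i) xs) (ys ! i))"
    using assms unfolding ccond_chan_def by blast
  define h where "h xs ys = (\<Sum>k<n. log 2 (q k (take k ys) (take (Suc k) xs) (ys!k)))" for xs ys
  show ?thesis
  proof (rule that)
    fix Q :: "'x list \<Rightarrow> 'y list \<Rightarrow> real" assume "ccond_input n Q"
    then obtain r :: "nat \<Rightarrow> 'x list \<Rightarrow> 'y list \<Rightarrow> 'x \<Rightarrow> real" where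
      r0: "\<And>i xs ys x. 0 \<le> r i xs ys x" and r1: "\<And>i xs ys. (\<Sum>x\<in>UNIV. r i xs ys x) = 1" and
      rQ: "\<And>xs ys. xs\<in>seqs n \<Longrightarrow> ys\<in>seqs n \<Longrightarrow> Q xs ys = (\<Prod>i<n. r i (take i xs) (take i ys) (xs ! i))"
      unfolding ccond_input_def by blast
    define J where "J xs ys = Q xs ys * W xs ys" for xs ys
    have JG: "J xs ys = Gp (gg r q) n xs ys" if "xs \<in> seqs n" "ys \<in> seqs n" for xs ys
      using that unfolding J_def Gp_def gg_def
      by (simp add: rQ qW prod.distrib[symmetric] seqs_def take_Suc_conv_app_nth)
    note ch = chain[OF r0 r1 q0 q1 JG]
    have pY: "pY (gg r q) n ys = (\<Sum>xs'\<in>seqs n. Q xs' ys * W xs' ys)" if "ys \<in> seqs n" for ys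
      unfolding pY_def using that by (intro sum.cong refl) (simp add: JG[symmetric] J_def)
    have "dirinfo n Q W = (\<Sum>i=1..n. cmi_term n J i)"
      unfolding dirinfo_def J_def ..
    also have "\<dots> = (\<Sum>xs\<in>seqs n. \<Sum>ys\<in>seqs n. Gp (gg r q) n xs ys *
       (\<Sum>k<n. log 2 (q k (take k ys) (take (Suc k) xs) (ys!k))))
     - (\<Sum>xs\<in>seqs n. \<Sum>ys\<in>seqs n. Gp (gg r q) n xs ys * log 2 (pY (gg r q) n ys))"
      by (rule ch)
    also have "\<dots> = (\<Sum>xs\<in>seqs n. \<Sum>ys\<in>seqs n. Q xs ys * W xs ys * h xs ys)
   - (\<Sum>xs\<in>seqs n. \<Sum>ys\<in>seqs n. Q xs ys * W xs ys * log 2 (\<Sum>xs'\<in>seqs n. Q xs' ys * W xs' ys))"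
      unfolding h_def
      by (intro arg_cong2[where f="(-)"] sum.cong refl) (simp_all add: JG[symmetric] J_def pY)
    finally show "dirinfo n Q W = (\<Sum>xs\<in>seqs n. \<Sum>ys\<in>seqs n. Q xs ys * W xs ys * h xs ys)
   - (\<Sum>xs\<in>seqs n. \<Sum>ys\<in>seqs n. Q xs ys * W xs ys * log 2 (\<Sum>xs'\<in>seqs n. Q xs' ys * W xs' ys))" .
  qed
qed




definition Mq :: "nat \<Rightarrow> ('x list \<Rightarrow> 'y list \<Rightarrow> real) \<Rightarrow> nat \<Rightarrow> 'x list \<Rightarrow> 'y list \<Rightarrow> real" where
  "Mq n Q k a ys = (\<Sum>zs\<in>seqs (n-k). Q (a@zs) ys)"

definition good :: "nat \<Rightarrow> ('x list \<Rightarrow> 'y list \<Rightarrow> real) \<Rightarrow> bool" where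
  "good n Q \<longleftrightarrow> (\<forall>xs\<in>seqs n. \<forall>ys\<in>seqs n. 0 \<le> Q xs ys) \<and> (\<forall>ys\<in>seqs n. Mq n Q 0 [] ys = 1) \<and>
     (\<forall>k<n. \<forall>a\<in>seqs k. \<forall>x. \<forall>ys\<in>seqs n. \<forall>ys'\<in>seqs n. take k ys = take k ys' \<longrightarrow>
        Mq n Q (Suc k) (a@[x]) ys = Mq n Q (Suc k) (a@[x]) ys')"

definition Rp :: "(nat \<Rightarrow> 'x list \<Rightarrow> 'y list \<Rightarrow> 'x \<Rightarrow> real) \<Rightarrow> nat \<Rightarrow> 'x list \<Rightarrow> 'y list \<Rightarrow> real" where
  "Rp r m xs ys = (\<Prod>k<m. r k (take k xs) (take k ys) (xs!k))"

lemma Rp_snoc: "length a = i \<Longrightarrow> Rp r (Suc i) (a@[x]) ys = Rp r i a ys * r i a (take i ys) x"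
  unfolding Rp_def by (auto simp: nth_append intro!: prod.cong)

lemma Rp_sumout:
  fixes r :: "nat \<Rightarrow> 'x::finite list \<Rightarrow> 'y list \<Rightarrow> 'x \<Rightarrow> real"
  assumes r1: "\<And>i xs ys. (\<Sum>x\<in>UNIV. r i xs ys x) = 1"
  shows "length a = i \<Longrightarrow> (\<Sum>zs\<in>seqs m. Rp r (i+m) (a@zs) ys) = Rp r i a ys"
proof (induction m arbitrary: i a)
  case 0 then show ?case by simp
next
  case (Suc m)
  have "(\<Sum>zs\<in>seqs (Suc m). Rp r (i+Suc m) (a@zs) ys) = (\<Sum>x\<in>UNIV. \<Sum>zs\<in>seqs m. Rp r (Suc i+m) ((a@[x])@zs) ys)"
    by (simp add: seqs_Suc_cons)
  also have "\<dots> = (\<Sum>x\<in>UNIV. Rp r (Suc i) (a@[x]) ys)"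
    using Suc.IH[of "a@[x]" "Suc i" for x] Suc.prems by simp
  also have "\<dots> = Rp r i a ys" using Suc.prems by (simp add: Rp_snoc sum_distrib_left[symmetric] r1)
  finally show ?case .
qed

lemma ccond_good:
  fixes Q :: "'x::finite list \<Rightarrow> 'y::finite list \<Rightarrow> real"
  assumes "ccond_input n Q" shows "good n Q"
proof -
  obtain r :: "nat \<Rightarrow> 'x list \<Rightarrow> 'y list \<Rightarrow> 'x \<Rightarrow> real" where
    r0: "\<And>i xs ys x. 0 \<le> r i xs ys x" and r1: "\<And>i xs ys. (\<Sum>x\<in>UNIV. r i xs ys x) = 1" and
    rQ: "\<And>xs ys. xs\<in>seqs n \<Longrightarrow> ys\<in>seqs n \<Longrightarrow> Q xs ys = Rp r n xs ys"
    using assms unfolding ccond_input_def Rp_def by blast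
  have M: "Mq n Q k a ys = Rp r k a ys" if "k \<le> n" "a \<in> seqs k" "ys \<in> seqs n" for k a ys
  proof -
    have "Mq n Q k a ys = (\<Sum>zs\<in>seqs (n-k). Rp r (k+(n-k)) (a@zs) ys)"
      unfolding Mq_def using that by (intro sum.cong refl) (auto simp: rQ seqs_def)
    also have "\<dots> = Rp r k a ys" using Rp_sumout[of r, OF r1, where a=a and i=k and m="n-k" and ys=ys] that by (simp add: seqs_def)
    finally show ?thesis .
  qed
  show ?thesis unfolding good_def
  proof (intro conjI ballI allI impI)
    fix xs :: "'x list" and ys :: "'y list" assume "xs \<in> seqs n" "ys \<in> seqs n"
    then show "0 \<le> Q xs ys" by (simp add: rQ Rp_def prod_nonneg r0)
  next
    fix ys :: "'y list" assume "ys \<in> seqs n"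
    then show "Mq n Q 0 [] ys = 1" by (simp add: M Rp_def)
  next
    fix k and a :: "'x list" and x and ys ys' :: "'y list" assume k: "k < n" and a: "a \<in> seqs k" and ys: "ys \<in> seqs n" and ys': "ys' \<in> seqs n"
      and t: "take k ys = take k ys'"
    have a': "a@[x] \<in> seqs (Suc k)" using a by (simp add: seqs_def)
    have "Rp r (Suc k) (a@[x]) ys = Rp r (Suc k) (a@[x]) ys'"
      unfolding Rp_def
    proof (rule prod.cong[OF refl])
      fix i assume "i \<in> {..<Suc k}"
      then have "take i ys = take i ys'" using t by (metis lessThan_iff less_Suc_eq_le min_def take_take)
      then show "r i (take i (a@[x])) (take i ys) ((a@[x])!i) = r i (take i (a@[x])) (take i ys') ((a@[x])!i)" by simp
    qed
    then show "Mq n Q (Suc k) (a@[x]) ys = Mq n Q (Suc k) (a@[x]) ys'"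
      using M[OF _ a' ys] M[OF _ a' ys'] k by simp
  qed
qed

lemma Mq_Suc:
  fixes Q :: "'x::finite list \<Rightarrow> 'y list \<Rightarrow> real"
  assumes "k < n"
  shows "Mq n Q k a ys = (\<Sum>x\<in>UNIV. Mq n Q (Suc k) (a@[x]) ys)"
proof -
  have "n - k = Suc (n - Suc k)" using assms by simp
  then show ?thesis unfolding Mq_def by (simp add: seqs_Suc_cons)
qed

lemma Mq_nonneg: "(\<forall>xs\<in>seqs n. \<forall>ys\<in>seqs n. 0 \<le> Q xs ys) \<Longrightarrow> a \<in> seqs k \<Longrightarrow> k \<le> n \<Longrightarrow> ys \<in> seqs n
   \<Longrightarrow> 0 \<le> Mq n Q k a ys"
  unfolding Mq_def by (intro sum_nonneg) (auto simp: seqs_def)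

lemma good_ccond:
  fixes Q :: "'x::finite list \<Rightarrow> 'y::finite list \<Rightarrow> real"
  assumes g: "good n Q" shows "ccond_input n Q"
proof -
  have Q0: "\<forall>xs\<in>seqs n. \<forall>ys\<in>seqs n. 0 \<le> Q xs ys" and M0: "\<And>ys. ys \<in> seqs n \<Longrightarrow> Mq n Q 0 [] ys = 1"
    and Cn: "\<And>k a x ys ys'. k < n \<Longrightarrow> a \<in> seqs k \<Longrightarrow> ys \<in> seqs n \<Longrightarrow> ys' \<in> seqs n \<Longrightarrow> take k ys = take k ys' \<Longrightarrow>
        Mq n Q (Suc k) (a@[x]) ys = Mq n Q (Suc k) (a@[x]) ys'"
    using g unfolding good_def by blast+
  define ext :: "'y list \<Rightarrow> 'y list" where "ext b = b @ replicate (n - length b) undefined" for b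
  have ext_s: "ext b \<in> seqs n" if "length b \<le> n" for b using that by (simp add: ext_def seqs_def)
  have ext_t: "take (length b) (ext b) = b" for b by (simp add: ext_def)
  define r :: "nat \<Rightarrow> 'x list \<Rightarrow> 'y list \<Rightarrow> 'x \<Rightarrow> real" where
    "r k a b x = (if length a = k \<and> length b = k \<and> k < n \<and> Mq n Q k a (ext b) \<noteq> 0
        then Mq n Q (Suc k) (a@[x]) (ext b) / Mq n Q k a (ext b) else 1 / real (card (UNIV :: 'x set)))" for k a b x
  have helper: "Mq n Q k a ys = Mq n Q k a ys'" if hk: "k \<le> n" and ha: "a \<in> seqs k" and hy: "ys \<in> seqs n" and hy': "ys' \<in> seqs n"
     and ht: "take k ys = take k ys'" for k a ys ys'
  proof (cases k)
    case 0 then show ?thesis using ha hy hy' M0 by (simp add: seqs_def)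
  next
    case (Suc j)
    then obtain a0 x where a: "a = a0@[x]" and a0: "a0 \<in> seqs j" using ha
      by (auto simp: seqs_def length_Suc_conv_rev)
    have "take j ys = take j ys'" using ht Suc by (metis le_add2 plus_1_eq_Suc min_def take_take)
    then show ?thesis using Cn[OF _ a0 hy hy'] Suc hk a by simp
  qed
  have r0: "0 \<le> r k a b x" for k a b x
  proof -
    have "0 \<le> Mq n Q (Suc k) (a@[x]) (ext b)" "0 \<le> Mq n Q k a (ext b)"
      if "length a = k" "length b = k" "k < n"
      using that by (auto intro!: Mq_nonneg[OF Q0] ext_s simp: seqs_def)
    then show ?thesis unfolding r_def by auto
  qed
  have r1: "(\<Sum>x\<in>UNIV. r k a b x) = 1" for k a b
  proof (cases "length a = k \<and> length b = k \<and> k < n \<and> Mq n Q k a (ext b) \<noteq> 0")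
    case True
    then have "(\<Sum>x\<in>UNIV. r k a b x) = (\<Sum>x\<in>UNIV. Mq n Q (Suc k) (a@[x]) (ext b)) / Mq n Q k a (ext b)"
      unfolding r_def by (simp add: sum_divide_distrib)
    also have "\<dots> = 1" using True Mq_Suc[of k n Q a "ext b"] by simp
    finally show ?thesis .
  next
    case False
    then have "(\<Sum>x\<in>UNIV. r k a b x) = (\<Sum>x\<in>(UNIV::'x set). 1 / real (card (UNIV :: 'x set)))"
      unfolding r_def by (intro sum.cong refl) auto
    then show ?thesis by simp
  qed
  have tel: "(\<Prod>k<m. r k (take k xs) (take k ys) (xs!k)) = Mq n Q m (take m xs) ys"
    if xs: "xs \<in> seqs n" and ys: "ys \<in> seqs n" and "m \<le> n" for xs ys m
    using that(3)
  proof (induction m)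
    case 0 then show ?case using M0[OF ys] by simp
  next
    case (Suc m)
    have m: "m < n" using Suc by simp
    define e where "e = ext (take m ys)"
    have lm: "length (take m ys) = m" "length (take m xs) = m" using m xs ys by (auto simp: seqs_def)
    have e: "e \<in> seqs n" "take m e = take m ys" using ext_s[of "take m ys"] ext_t[of "take m ys"] lm m
      by (auto simp: e_def)
    have txs: "take m xs \<in> seqs m" using lm by (simp add: seqs_def)
    have Me: "Mq n Q m (take m xs) e = Mq n Q m (take m xs) ys"
      using helper[OF _ txs e(1) ys e(2)] m by simp
    have Me2: "Mq n Q (Suc m) (take m xs @ [xs!m]) e = Mq n Q (Suc m) (take m xs @ [xs!m]) ys"
      using Cn[OF m txs e(1) ys e(2)] .
    have tS: "take (Suc m) xs = take m xs @ [xs!m]" using m xs by (simp add: seqs_def take_Suc_conv_app_nth)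
    have IH: "(\<Prod>k<m. r k (take k xs) (take k ys) (xs!k)) = Mq n Q m (take m xs) ys" using Suc by simp
    show ?case
    proof (cases "Mq n Q m (take m xs) ys = 0")
      case True
      have "(\<Sum>x\<in>UNIV. Mq n Q (Suc m) (take m xs @ [x]) ys) = 0" using True Mq_Suc[OF m, of Q "take m xs" ys] by linarith
      moreover have "\<forall>x\<in>UNIV. 0 \<le> Mq n Q (Suc m) (take m xs @ [x]) ys"
        using m txs ys by (intro ballI Mq_nonneg[OF Q0]) (auto simp: seqs_def)
      ultimately have "Mq n Q (Suc m) (take m xs @ [xs!m]) ys = 0"
        using sum_nonneg_eq_0_iff[of UNIV "\<lambda>x. Mq n Q (Suc m) (take m xs @ [x]) ys"] by simp
      then show ?thesis using IH True by (simp add: tS)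
    next
      case False
      have "r m (take m xs) (take m ys) (xs!m) = Mq n Q (Suc m) (take m xs @ [xs!m]) ys / Mq n Q m (take m xs) ys"
        unfolding r_def using lm m False Me Me2 by (simp add: e_def)
      then show ?thesis using IH False by (simp add: tS)
    qed
  qed
  show ?thesis unfolding ccond_input_def
  proof (intro exI[of _ r] conjI allI ballI r0 r1)
    fix xs :: "'x list" and ys :: "'y list" assume xs: "xs \<in> seqs n" and ys: "ys \<in> seqs n"
    have "Mq n Q n (take n xs) ys = Q xs ys" using xs by (simp add: Mq_def seqs_def)
    then show "Q xs ys = (\<Prod>i<n. r i (take i xs) (take i ys) (xs ! i))" using tel[OF xs ys] by simp
  qed
qed

lemma good_pmf:
  fixes P :: "'x::finite list \<Rightarrow> real"
  assumes "is_pmf_seq n P" shows "good n (\<lambda>xs (ys::'y list). P xs)"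
proof -
  have p0: "\<forall>xs\<in>seqs n. 0 \<le> P xs" and p1: "(\<Sum>xs\<in>seqs n. P xs) = 1" using assms unfolding is_pmf_seq_def by auto
  show ?thesis unfolding good_def
  proof (intro conjI)
    show "\<forall>xs\<in>seqs n. \<forall>ys\<in>seqs n. 0 \<le> P xs" using p0 by blast
    show "\<forall>ys\<in>seqs n. Mq n (\<lambda>xs (ys::'y list). P xs) 0 [] ys = 1" using p1 by (simp add: Mq_def)
    show "\<forall>k<n. \<forall>a\<in>seqs k. \<forall>x. \<forall>ys\<in>seqs n. \<forall>ys'\<in>seqs n. take k ys = take k ys' \<longrightarrow>
        Mq n (\<lambda>xs (ys::'y list). P xs) (Suc k) (a@[x]) ys = Mq n (\<lambda>xs (ys::'y list). P xs) (Suc k) (a@[x]) ys'"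
      by (simp add: Mq_def)
  qed
qed

lemma good_mix:
  fixes Q1 Q2 :: "'x list \<Rightarrow> 'y list \<Rightarrow> real"
  assumes "good n Q1" "good n Q2" "c1 + c2 = 1"
    and "\<forall>xs\<in>seqs n. \<forall>ys\<in>seqs n. 0 \<le> c1 * Q1 xs ys + c2 * Q2 xs ys"
  shows "good n (\<lambda>xs ys. c1 * Q1 xs ys + c2 * Q2 xs ys)"
proof -
  have lin: "Mq n (\<lambda>xs ys. c1 * Q1 xs ys + c2 * Q2 xs ys) k a ys = c1 * Mq n Q1 k a ys + c2 * Mq n Q2 k a ys" for k a ys
    unfolding Mq_def by (simp add: sum.distrib sum_distrib_left)
  note G1 = assms(1)[unfolded good_def] and G2 = assms(2)[unfolded good_def]
  note A11 = G1[THEN conjunct2, THEN conjunct1] and A12 = G2[THEN conjunct2, THEN conjunct1]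
  note A21 = G1[THEN conjunct2, THEN conjunct2] and A22 = G2[THEN conjunct2, THEN conjunct2]
  show ?thesis unfolding good_def lin
  proof (intro conjI)
    show "\<forall>ys\<in>seqs n. c1 * Mq n Q1 0 [] ys + c2 * Mq n Q2 0 [] ys = 1" using A11 A12 assms(3) by simp
    show "\<forall>k<n. \<forall>a\<in>seqs k. \<forall>x. \<forall>ys\<in>seqs n. \<forall>ys'\<in>seqs n. take k ys = take k ys' \<longrightarrow>
        c1 * Mq n Q1 (Suc k) (a@[x]) ys + c2 * Mq n Q2 (Suc k) (a@[x]) ys = c1 * Mq n Q1 (Suc k) (a@[x]) ys' + c2 * Mq n Q2 (Suc k) (a@[x]) ys'"
    proof (intro allI ballI impI)
      fix k and a :: "'x list" and x and ys ys' :: "'y list" assume "k < n" "a \<in> seqs k" "ys \<in> seqs n" "ys' \<in> seqs n" "take k ys = take k ys'"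
      then have "Mq n Q1 (Suc k) (a@[x]) ys = Mq n Q1 (Suc k) (a@[x]) ys'" "Mq n Q2 (Suc k) (a@[x]) ys = Mq n Q2 (Suc k) (a@[x]) ys'"
        using A21 A22 by blast+
      then show "c1 * Mq n Q1 (Suc k) (a@[x]) ys + c2 * Mq n Q2 (Suc k) (a@[x]) ys = c1 * Mq n Q1 (Suc k) (a@[x]) ys' + c2 * Mq n Q2 (Suc k) (a@[x]) ys'"
        by simp
    qed
  qed (use assms(4) in blast)
qed




lemma key:
  fixes W :: "nat \<Rightarrow> 'x::finite list \<Rightarrow> 'y::finite list \<Rightarrow> real"
  assumes chan: "ccond_chan n (W n)"
    and Qs: "ccond_input n Qs" and Qpos: "\<forall>xs\<in>seqs n. \<forall>ys\<in>seqs n. Qs xs ys > 0"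
    and opt: "\<forall>Q. ccond_input n Q \<longrightarrow> dirinfo n Q (W n) \<le> dirinfo n Qs (W n)"
    and P: "is_pmf_seq n P"
    and out: "\<forall>ys\<in>seqs n. (\<Sum>xs\<in>seqs n. W n xs ys * Qs xs ys) = (\<Sum>xs\<in>seqs n. W n xs ys * P xs)"
  shows "Cfb_n W n = Cnf_n W n"
proof -
  obtain h where hf: "\<And>Q. ccond_input n Q \<Longrightarrow> dirinfo n Q (W n) =
     (\<Sum>xs\<in>seqs n. \<Sum>ys\<in>seqs n. Q xs ys * W n xs ys * h xs ys)
   - (\<Sum>xs\<in>seqs n. \<Sum>ys\<in>seqs n. Q xs ys * W n xs ys * log 2 (\<Sum>xs'\<in>seqs n. Q xs' ys * W n xs' ys))"
    using dirinfo_formula[OF chan] by blast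
  define p where "p ys = (\<Sum>xs\<in>seqs n. Qs xs ys * W n xs ys)" for ys
  define Lin where "Lin Q = (\<Sum>xs\<in>seqs n. \<Sum>ys\<in>seqs n. Q xs ys * W n xs ys * (h xs ys - log 2 (p ys)))"
    for Q :: "'x list \<Rightarrow> 'y list \<Rightarrow> real"
  have F1: "dirinfo n Q (W n) = Lin Q" if "ccond_input n Q"
    and o: "\<forall>ys\<in>seqs n. (\<Sum>xs\<in>seqs n. Q xs ys * W n xs ys) = p ys" for Q
  proof -
    have "dirinfo n Q (W n) = (\<Sum>xs\<in>seqs n. \<Sum>ys\<in>seqs n. Q xs ys * W n xs ys * h xs ys)
       - (\<Sum>xs\<in>seqs n. \<Sum>ys\<in>seqs n. Q xs ys * W n xs ys * log 2 (p ys))"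
      using hf[OF that(1)] o by simp
    also have "\<dots> = Lin Q" unfolding Lin_def
      by (simp add: sum_subtractf right_diff_distrib)
    finally show ?thesis .
  qed
  have lin: "Lin (\<lambda>xs ys. a * Q1 xs ys + b * Q2 xs ys) = a * Lin Q1 + b * Lin Q2" for a b Q1 Q2
    unfolding Lin_def sum_distrib_left sum.distrib[symmetric] by (intro sum.cong refl) (simp add: algebra_simps)
  define P' where "P' = (\<lambda>xs (ys::'y list). P xs)"
  have gP: "good n P'" unfolding P'_def by (rule good_pmf[OF P])
  have gQ: "good n Qs" by (rule ccond_good[OF Qs])
  have cP: "ccond_input n P'" by (rule good_ccond[OF gP])
  have oQ: "\<forall>ys\<in>seqs n. (\<Sum>xs\<in>seqs n. Qs xs ys * W n xs ys) = p ys" by (simp add: p_def)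
  have oP: "\<forall>ys\<in>seqs n. (\<Sum>xs\<in>seqs n. P' xs ys * W n xs ys) = p ys"
    using out by (simp add: p_def P'_def mult.commute)
  have "(replicate n undefined :: 'x list) \<in> seqs n" "(replicate n undefined :: 'y list) \<in> seqs n" by (simp_all add: seqs_def)
  then have ne: "(seqs n :: 'x list set) \<noteq> {}" "(seqs n :: 'y list set) \<noteq> {}" by blast+
  define m where "m = Min ((\<lambda>(xs,ys). Qs xs ys) ` (seqs n \<times> seqs n))"
  have fin: "finite ((\<lambda>(xs,ys). Qs xs ys) ` (seqs n \<times> seqs n))" by simp
  have mle: "m \<le> Qs xs ys" if "xs \<in> seqs n" "ys \<in> seqs n" for xs ys
    unfolding m_def using that fin by (intro Min_le) auto
  have m0: "0 < m"
  proof -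
    have "(\<lambda>(xs,ys). Qs xs ys) ` (seqs n \<times> seqs n) \<noteq> {}" using ne by simp
    then have "m \<in> (\<lambda>(xs,ys). Qs xs ys) ` (seqs n \<times> seqs n)" unfolding m_def
      by (rule Min_in[OF fin])
    then obtain pp where pp: "pp \<in> seqs n \<times> seqs n" "m = (\<lambda>(xs,ys). Qs xs ys) pp" by (rule imageE)
    obtain xs ys where "pp = (xs, ys)" by (cases pp)
    then show ?thesis using Qpos pp by simp
  qed
  have P1: "P xs \<le> 1" if "xs \<in> seqs n" for xs
  proof -
    have "P xs \<le> (\<Sum>xs\<in>seqs n. P xs)" using P that unfolding is_pmf_seq_def
      by (intro member_le_sum) auto
    then show ?thesis using P unfolding is_pmf_seq_def by simp
  qed
  have P0: "0 \<le> P xs" if "xs \<in> seqs n" for xs using P that unfolding is_pmf_seq_def by auto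
  define Qm where "Qm = (\<lambda>xs ys. (1+m) * Qs xs ys + (-m) * P' xs ys)"
  have nn: "\<forall>xs\<in>seqs n. \<forall>ys\<in>seqs n. 0 \<le> (1+m) * Qs xs ys + (-m) * P' xs ys"
  proof (intro ballI)
    fix xs :: "'x list" and ys :: "'y list" assume xs: "xs \<in> seqs n" and ys: "ys \<in> seqs n"
    have "m * P xs \<le> m * 1" using P1[OF xs] m0 by (intro mult_left_mono) auto
    moreover have "0 < Qs xs ys" using Qpos xs ys by blast
    then have "0 \<le> m * Qs xs ys" using m0 by simp
    ultimately show "0 \<le> (1+m) * Qs xs ys + (-m) * P' xs ys"
      using mle[OF xs ys] unfolding P'_def by (simp add: algebra_simps)
  qed
  have gm: "good n Qm" unfolding Qm_def by (rule good_mix[OF gQ gP _ nn]) simp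
  have cm: "ccond_input n Qm" by (rule good_ccond[OF gm])
  have om: "\<forall>ys\<in>seqs n. (\<Sum>xs\<in>seqs n. Qm xs ys * W n xs ys) = p ys"
  proof
    fix ys :: "'y list" assume ys: "ys \<in> seqs n"
    have "(\<Sum>xs\<in>seqs n. Qm xs ys * W n xs ys) = (1+m) * (\<Sum>xs\<in>seqs n. Qs xs ys * W n xs ys)
        + (-m) * (\<Sum>xs\<in>seqs n. P' xs ys * W n xs ys)"
      unfolding Qm_def sum_distrib_left sum.distrib[symmetric] by (intro sum.cong refl) (simp add: algebra_simps)
    then show "(\<Sum>xs\<in>seqs n. Qm xs ys * W n xs ys) = p ys" using oQ oP ys by (simp add: algebra_simps)
  qed
  have dQ: "dirinfo n Qs (W n) = Lin Qs" by (rule F1[OF Qs oQ])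
  have dP: "dirinfo n P' (W n) = Lin P'" by (rule F1[OF cP oP])
  have dm: "dirinfo n Qm (W n) = (1+m) * Lin Qs + (-m) * Lin P'"
    using F1[OF cm om] lin[of "1+m" Qs "-m" P'] unfolding Qm_def by simp
  have "dirinfo n Qm (W n) \<le> dirinfo n Qs (W n)" using opt cm by blast
  then have "m * Lin Qs \<le> m * Lin P'" using dm dQ by (simp add: algebra_simps)
  then have "Lin Qs \<le> Lin P'" using m0 by simp
  moreover have "dirinfo n P' (W n) \<le> dirinfo n Qs (W n)" using opt cP by blast
  ultimately have eq: "dirinfo n P' (W n) = dirinfo n Qs (W n)" using dQ dP by simp
  have fb: "Cfb_n W n = dirinfo n Qs (W n)" unfolding Cfb_n_def
    by (rule cSup_eq_maximum) (use Qs opt in auto)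
  have nf: "Cnf_n W n = dirinfo n Qs (W n)" unfolding Cnf_n_def
  proof (rule cSup_eq_maximum)
    show "dirinfo n Qs (W n) \<in> (\<lambda>P. dirinfo n (\<lambda>xs ys. P xs) (W n)) ` {P. is_pmf_seq n P}"
      using eq P unfolding P'_def by (intro image_eqI[of _ _ P]) auto
  next
    fix x assume "x \<in> (\<lambda>P. dirinfo n (\<lambda>xs ys. P xs) (W n)) ` {P. is_pmf_seq n P}"
    then obtain P2 where P2: "is_pmf_seq n P2" and x: "x = dirinfo n (\<lambda>xs (ys::'y list). P2 xs) (W n)" by auto
    have "ccond_input n (\<lambda>xs (ys::'y list). P2 xs)" by (rule good_ccond[OF good_pmf[OF P2]])
    then show "x \<le> dirinfo n Qs (W n)" using opt x by blast
  qed
  show ?thesis using fb nf by simp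
qed

theorem corollary1:
  fixes W :: "nat \<Rightarrow> 'x::finite list \<Rightarrow> 'y::finite list \<Rightarrow> real"
  assumes chan: "\<And>n. n \<ge> 1 \<Longrightarrow> ccond_chan n (W n)"
    and hyp: "\<And>n. n \<ge> 1 \<Longrightarrow>
      \<exists>Qs. ccond_input n Qs
        \<and> (\<forall>xs\<in>seqs n. \<forall>ys\<in>seqs n. Qs xs ys > 0)
        \<and> (\<forall>Q. ccond_input n Q \<longrightarrow> dirinfo n Q (W n) \<le> dirinfo n Qs (W n))
        \<and> (\<exists>P. is_pmf_seq n P \<and>
             (\<forall>ys\<in>seqs n. (\<Sum>xs\<in>seqs n. W n xs ys * Qs xs ys) = (\<Sum>xs\<in>seqs n. W n xs ys * P xs)))"
  shows "feedback_capacity W = capacity W"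
proof -
  have fe: "Cfb_n W n / real n = Cnf_n W n / real n" for n
  proof (cases "n = 0")
    case True then show ?thesis by simp
  next
    case False
    then have n1: "n \<ge> 1" by simp
    from hyp[OF n1] obtain Qs P where "ccond_input n Qs" "\<forall>xs\<in>seqs n. \<forall>ys\<in>seqs n. Qs xs ys > 0"
      "\<forall>Q. ccond_input n Q \<longrightarrow> dirinfo n Q (W n) \<le> dirinfo n Qs (W n)" "is_pmf_seq n P"
      "\<forall>ys\<in>seqs n. (\<Sum>xs\<in>seqs n. W n xs ys * Qs xs ys) = (\<Sum>xs\<in>seqs n. W n xs ys * P xs)"
      by blast
    then show ?thesis using key[where W=W and n=n and Qs=Qs and P=P] chan[OF n1] by simp
  qed
  have "(\<lambda>n. Cfb_n W n / real n) = (\<lambda>n. Cnf_n W n / real n)" by (rule ext) (rule fe)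
  then show ?thesis unfolding feedback_capacity_def capacity_def by simp
qed


end
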